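(* Let $G$ be a countable discrete group and $S=S^{-1}\subset G$ a finite symmetric generating set. Then $\mathrm{Ind}(\mathcal X_S:\mathbb C1)\le 1+\rho(S)$.
   Context: $C^*_\lambda(G)$ is the reduced group C$^*$-algebra with left regular representation $\lambda$, and $\mathcal X_S=\mathrm{span}\{\lambda(s):s\in S\cup\{e\}\}\subset C^*_\lambda(G)$ (an operator system). $E:C^*_\lambda(G)\to\mathbb C1$ is the canonical conditional expectation $E(x)=\tau(x)1$ with $\tau$ the canonical trace. For self-adjoint $x\in\mathcal X_S\setminus\{0\}$ with $E(x)=0$, let $a,b>0$ be the smallest constants with $a1-x\ge0$ and $b1+x\ge0$, and set $\rho(x)=\max\{a/b,b/a\}$; $\rho(S)=\sup\{\rho(x):x=x^*\in\mathcal X_S\setminus\{0\},\ E(x)=0\}$. For an operator system $\mathcal X$ with unit $1$ and subsystem $\mathcal X_0$, $\mathrm{Ind}(\mathcal X:\mathcal X_0)=\inf\{\|\phi(1)\|:\phi\in\mathrm{CP}_1(\mathcal X),\ \phi(\mathcal X)\subset\mathcal X_0,\ \phi-\mathrm{id}_{\mathcal X}\text{ positive}\}$ ($\infty$ if empty), where $\mathrm{CP}_1(\mathcal X)$ is the set of completely positive $\phi:\mathcal X\to\mathcal X$ with $\phi(\mathbb C1)\subset\mathbb C1$ and "positive" means mapping positive elements to positive elements (not necessarily completely). *)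

theory Defs
  imports "HOL-Algebra.Generated_Groups" "HOL-Analysis.Infinite_Sum" "HOL-Library.Extended_Real"
begin

text \<open>Model: elements of the group algebra (finitely supported functions on carrier G),
acting on l2(G) by the left regular representation lambda. Everything below
is relative to the concrete faithful representation of C*_lambda(G) on l2(G).\<close>

definition nonneg_c :: "complex \<Rightarrow> bool" where
  "nonneg_c z \<longleftrightarrow> Im z = 0 \<and> Re z \<ge> 0"

definition l2 :: "('a, 'b) monoid_scheme \<Rightarrow> ('a \<Rightarrow> complex) set" where
  "l2 G = {\<xi>. (\<forall>g. g \<notin> carrier G \<longrightarrow> \<xi> g = 0) \<and>
              (\<lambda>g. (cmod (\<xi> g))^2) summable_on carrier G}"

definition l2_inner :: "('a, 'b) monoid_scheme \<Rightarrow> ('a \<Rightarrow> complex) \<Rightarrow> ('a \<Rightarrow> complex) \<Rightarrow> complex" where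
  "l2_inner G \<xi> \<eta> = infsum (\<lambda>g. \<xi> g * cnj (\<eta> g)) (carrier G)"

definition l2_norm :: "('a, 'b) monoid_scheme \<Rightarrow> ('a \<Rightarrow> complex) \<Rightarrow> real" where
  "l2_norm G \<xi> = sqrt (infsum (\<lambda>g. (cmod (\<xi> g))^2) (carrier G))"

definition fin_supp :: "('a, 'b) monoid_scheme \<Rightarrow> ('a \<Rightarrow> complex) \<Rightarrow> bool" where
  "fin_supp G f \<longleftrightarrow> finite {g. f g \<noteq> 0} \<and> (\<forall>g. g \<notin> carrier G \<longrightarrow> f g = 0)"

text \<open>Action of lambda(f) = sum_h f(h) lambda(h) on xi: (lambda(h) xi)(g) = xi(h^-1 g).\<close>
definition lreg :: "('a, 'b) monoid_scheme \<Rightarrow> ('a \<Rightarrow> complex) \<Rightarrow> ('a \<Rightarrow> complex) \<Rightarrow> ('a \<Rightarrow> complex)" where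
  "lreg G f \<xi> = (\<lambda>g. if g \<in> carrier G
       then (\<Sum>h\<in>{h\<in>carrier G. f h \<noteq> 0}. f h * \<xi> (inv\<^bsub>G\<^esub> h \<otimes>\<^bsub>G\<^esub> g)) else 0)"

definition op_norm :: "('a, 'b) monoid_scheme \<Rightarrow> ('a \<Rightarrow> complex) \<Rightarrow> real" where
  "op_norm G f = Sup {l2_norm G (lreg G f \<xi>) | \<xi>. \<xi> \<in> l2 G \<and> l2_norm G \<xi> \<le> 1}"

definition pos_elem :: "('a, 'b) monoid_scheme \<Rightarrow> ('a \<Rightarrow> complex) \<Rightarrow> bool" where
  "pos_elem G f \<longleftrightarrow> (\<forall>\<xi>\<in>l2 G. nonneg_c (l2_inner G (lreg G f \<xi>) \<xi>))"

definition pos_mat :: "('a, 'b) monoid_scheme \<Rightarrow> nat \<Rightarrow> (nat \<Rightarrow> nat \<Rightarrow> 'a \<Rightarrow> complex) \<Rightarrow> bool" where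
  "pos_mat G n F \<longleftrightarrow> (\<forall>\<xi> :: nat \<Rightarrow> 'a \<Rightarrow> complex. (\<forall>i<n. \<xi> i \<in> l2 G) \<longrightarrow>
      nonneg_c (\<Sum>i<n. \<Sum>j<n. l2_inner G (lreg G (F i j) (\<xi> j)) (\<xi> i)))"

definition unit_el :: "('a, 'b) monoid_scheme \<Rightarrow> ('a \<Rightarrow> complex)" where
  "unit_el G = (\<lambda>g. if g = \<one>\<^bsub>G\<^esub> then 1 else 0)"

definition scalars :: "('a, 'b) monoid_scheme \<Rightarrow> ('a \<Rightarrow> complex) set" where
  "scalars G = {(\<lambda>g. c * unit_el G g) | c. True}"

definition cp_map :: "('a, 'b) monoid_scheme \<Rightarrow> ('a \<Rightarrow> complex) set
     \<Rightarrow> (('a \<Rightarrow> complex) \<Rightarrow> ('a \<Rightarrow> complex)) \<Rightarrow> bool" where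
  "cp_map G X \<phi> \<longleftrightarrow> \<phi> ` X \<subseteq> X \<and>
     (\<forall>x\<in>X. \<forall>y\<in>X. \<forall>c::complex. \<phi> (\<lambda>g. c * x g + y g) = (\<lambda>g. c * \<phi> x g + \<phi> y g)) \<and>
     (\<forall>n F. (\<forall>i<n. \<forall>j<n. F i j \<in> X) \<longrightarrow> pos_mat G n F \<longrightarrow> pos_mat G n (\<lambda>i j. \<phi> (F i j)))"

definition CP1 :: "('a, 'b) monoid_scheme \<Rightarrow> ('a \<Rightarrow> complex) set
     \<Rightarrow> (('a \<Rightarrow> complex) \<Rightarrow> ('a \<Rightarrow> complex)) set" where
  "CP1 G X = {\<phi>. cp_map G X \<phi> \<and> \<phi> ` scalars G \<subseteq> scalars G}"

definition Ind :: "('a, 'b) monoid_scheme \<Rightarrow> ('a \<Rightarrow> complex) set \<Rightarrow> ('a \<Rightarrow> complex) set \<Rightarrow> ereal" where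
  "Ind G X X0 = Inf {ereal (op_norm G (\<phi> (unit_el G))) | \<phi>.
      \<phi> \<in> CP1 G X \<and> \<phi> ` X \<subseteq> X0 \<and>
      (\<forall>x\<in>X. pos_elem G x \<longrightarrow> pos_elem G (\<lambda>g. \<phi> x g - x g))}"

text \<open>X_S = span {lambda(s) : s in S union {e}}.\<close>
definition XS :: "('a, 'b) monoid_scheme \<Rightarrow> 'a set \<Rightarrow> ('a \<Rightarrow> complex) set" where
  "XS G S = {f. fin_supp G f \<and> (\<forall>g. f g \<noteq> 0 \<longrightarrow> g \<in> S \<union> {\<one>\<^bsub>G\<^esub>})}"

definition self_adj :: "('a, 'b) monoid_scheme \<Rightarrow> ('a \<Rightarrow> complex) \<Rightarrow> bool" where
  "self_adj G f \<longleftrightarrow> (\<forall>g\<in>carrier G. f (inv\<^bsub>G\<^esub> g) = cnj (f g))"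

definition upper_const :: "('a, 'b) monoid_scheme \<Rightarrow> ('a \<Rightarrow> complex) \<Rightarrow> real" where
  "upper_const G f = Inf {t::real. pos_elem G (\<lambda>g. of_real t * unit_el G g - f g)}"

definition lower_const :: "('a, 'b) monoid_scheme \<Rightarrow> ('a \<Rightarrow> complex) \<Rightarrow> real" where
  "lower_const G f = Inf {t::real. pos_elem G (\<lambda>g. of_real t * unit_el G g + f g)}"

definition rho_el :: "('a, 'b) monoid_scheme \<Rightarrow> ('a \<Rightarrow> complex) \<Rightarrow> real" where
  "rho_el G f = max (upper_const G f / lower_const G f) (lower_const G f / upper_const G f)"

text \<open>rho(S) as a supremum in the extended reals (sup of the empty set taken as 0).\<close>
definition rho_S :: "('a, 'b) monoid_scheme \<Rightarrow> 'a set \<Rightarrow> ereal" where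
  "rho_S G S = Sup ({ereal (rho_el G f) | f. f \<in> XS G S \<and> self_adj G f \<and>
                       (\<exists>g. f g \<noteq> 0) \<and> f \<one>\<^bsub>G\<^esub> = 0} \<union> {0})"

end

theory Submission
  imports Defs
begin

lemma l2_prod_summable:
  fixes a b :: "'a \<Rightarrow> complex"
  assumes "(\<lambda>g. (cmod (a g))^2) summable_on C" "(\<lambda>g. (cmod (b g))^2) summable_on C"
  shows "(\<lambda>g. a g * cnj (b g)) summable_on C"
    and "cmod (infsum (\<lambda>g. a g * cnj (b g)) C) \<le>
           infsum (\<lambda>g. (cmod (a g))^2) C + infsum (\<lambda>g. (cmod (b g))^2) C"
proof -
  have s: "(\<lambda>g. (cmod (a g))^2 + (cmod (b g))^2) summable_on C"
    by (rule summable_on_add[OF assms])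
  have le: "norm (a g * cnj (b g)) \<le> norm ((cmod (a g))^2 + (cmod (b g))^2)" for g
  proof -
    have "norm (a g * cnj (b g)) = cmod (a g) * cmod (b g)" by (simp add: norm_mult)
    also have "\<dots> \<le> (cmod (a g))^2 + (cmod (b g))^2"
    proof -
      have "2 * (cmod (a g) * cmod (b g)) \<le> (cmod (a g))^2 + (cmod (b g))^2"
        using sum_squares_bound[of "cmod (a g)" "cmod (b g)"] by (simp add: mult.assoc)
      moreover have "0 \<le> cmod (a g) * cmod (b g)" by simp
      ultimately show ?thesis by linarith
    qed
    finally have "norm (a g * cnj (b g)) \<le> (cmod (a g))^2 + (cmod (b g))^2" .
    moreover have "norm ((cmod (a g))^2 + (cmod (b g))^2 :: real) = (cmod (a g))^2 + (cmod (b g))^2"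
      by (metis real_norm_def abs_of_nonneg add_nonneg_nonneg zero_le_power2)
    ultimately show ?thesis by simp
  qed
  have sa: "(\<lambda>g. (cmod (a g))^2 + (cmod (b g))^2) abs_summable_on C"
    by (rule summable_on_iff_abs_summable_on_real[THEN iffD1, OF s])
  have abs: "(\<lambda>g. a g * cnj (b g)) abs_summable_on C"
    by (rule abs_summable_on_comparison_test[OF sa], rule le)
  then show "(\<lambda>g. a g * cnj (b g)) summable_on C" by (rule abs_summable_summable)
  have "cmod (infsum (\<lambda>g. a g * cnj (b g)) C) \<le> infsum (\<lambda>g. norm (a g * cnj (b g))) C"
    by (rule norm_infsum_bound[OF abs])
  also have "\<dots> \<le> infsum (\<lambda>g. (cmod (a g))^2 + (cmod (b g))^2) C"
  proof (rule infsum_mono[OF abs s])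
    fix g assume "g \<in> C"
    have "\<bar>(cmod (a g))^2 + (cmod (b g))^2\<bar> = (cmod (a g))^2 + (cmod (b g))^2" by simp
    then show "norm (a g * cnj (b g)) \<le> (cmod (a g))^2 + (cmod (b g))^2"
      using le[of g] by (simp only: real_norm_def)
  qed
  also have "\<dots> = infsum (\<lambda>g. (cmod (a g))^2) C + infsum (\<lambda>g. (cmod (b g))^2) C"
    by (rule infsum_add[OF assms])
  finally show "cmod (infsum (\<lambda>g. a g * cnj (b g)) C) \<le>
           infsum (\<lambda>g. (cmod (a g))^2) C + infsum (\<lambda>g. (cmod (b g))^2) C" .
qed


lemma infsum_finite_sum:
  fixes F :: "'i \<Rightarrow> 'a \<Rightarrow> complex"
  assumes "finite T" "\<And>h. h \<in> T \<Longrightarrow> F h summable_on A"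
  shows "infsum (\<lambda>g. \<Sum>h\<in>T. F h g) A = (\<Sum>h\<in>T. infsum (F h) A)"
    and "(\<lambda>g. \<Sum>h\<in>T. F h g) summable_on A"
  using assms
proof (induction T rule: finite_induct)
  case empty
  { case 1 show ?case by simp }
  { case 2 show ?case by simp }
next
  case (insert x T)
  { case 1
    have "infsum (\<lambda>g. \<Sum>h\<in>insert x T. F h g) A = infsum (\<lambda>g. F x g + (\<Sum>h\<in>T. F h g)) A"
      using insert by simp
    also have "\<dots> = infsum (F x) A + infsum (\<lambda>g. \<Sum>h\<in>T. F h g) A"
      using 1 insert by (intro infsum_add) auto
    also have "\<dots> = (\<Sum>h\<in>insert x T. infsum (F h) A)" using 1 insert by simp
    finally show ?case . }
  { case 2
    have "(\<lambda>g. F x g + (\<Sum>h\<in>T. F h g)) summable_on A"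
      using 2 insert by (intro summable_on_add) auto
    then show ?case using insert by simp }
qed

definition acoef :: "('a, 'b) monoid_scheme \<Rightarrow> ('a \<Rightarrow> complex) \<Rightarrow> ('a \<Rightarrow> complex) \<Rightarrow> 'a \<Rightarrow> complex" where
  "acoef G \<xi> \<eta> h = infsum (\<lambda>g. \<xi> (inv\<^bsub>G\<^esub> h \<otimes>\<^bsub>G\<^esub> g) * cnj (\<eta> g)) (carrier G)"

definition nsq :: "('a, 'b) monoid_scheme \<Rightarrow> ('a \<Rightarrow> complex) \<Rightarrow> real" where
  "nsq G \<xi> = infsum (\<lambda>g. (cmod (\<xi> g))^2) (carrier G)"

context group begin

lemma shift_bij: "h \<in> carrier G \<Longrightarrow> bij_betw (\<lambda>g. inv h \<otimes> g) (carrier G) (carrier G)"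
  by (rule bij_betw_byWitness[where f'="\<lambda>g. h \<otimes> g"])
     (auto simp: m_assoc[symmetric])

lemma shift_sq:
  assumes "\<xi> \<in> l2 G" "h \<in> carrier G"
  shows "(\<lambda>g. (cmod (\<xi> (inv h \<otimes> g)))^2) summable_on carrier G"
    and "infsum (\<lambda>g. (cmod (\<xi> (inv h \<otimes> g)))^2) (carrier G) = nsq G \<xi>"
proof -
  have s: "(\<lambda>g. (cmod (\<xi> g))^2) summable_on carrier G" using assms(1) by (simp add: l2_def)
  show "(\<lambda>g. (cmod (\<xi> (inv h \<otimes> g)))^2) summable_on carrier G"
    using summable_on_reindex_bij_betw[OF shift_bij[OF assms(2)], of "\<lambda>g. (cmod (\<xi> g))^2"] s by simp
  show "infsum (\<lambda>g. (cmod (\<xi> (inv h \<otimes> g)))^2) (carrier G) = nsq G \<xi>"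
    unfolding nsq_def
    by (rule infsum_reindex_bij_betw[OF shift_bij[OF assms(2)], of "\<lambda>g. (cmod (\<xi> g))^2"])
qed

lemma l2_sq: "\<xi> \<in> l2 G \<Longrightarrow> (\<lambda>g. (cmod (\<xi> g))^2) summable_on carrier G"
  by (simp add: l2_def)

lemma acoef_summable:
  assumes "\<xi> \<in> l2 G" "\<eta> \<in> l2 G" "h \<in> carrier G"
  shows "(\<lambda>g. \<xi> (inv h \<otimes> g) * cnj (\<eta> g)) summable_on carrier G"
  by (rule l2_prod_summable(1)[OF shift_sq(1)[OF assms(1,3)] l2_sq[OF assms(2)]])

lemma acoef_bound:
  assumes "\<xi> \<in> l2 G" "\<eta> \<in> l2 G" "h \<in> carrier G"
  shows "cmod (acoef G \<xi> \<eta> h) \<le> nsq G \<xi> + nsq G \<eta>"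
  using l2_prod_summable(2)[OF shift_sq(1)[OF assms(1,3)] l2_sq[OF assms(2)]]
  unfolding acoef_def shift_sq(2)[OF assms(1,3)] by (simp add: nsq_def)

lemma nsq_nonneg: "nsq G \<xi> \<ge> 0"
  unfolding nsq_def by (rule infsum_nonneg) simp

lemma acoef_one:
  assumes "\<xi> \<in> l2 G"
  shows "acoef G \<xi> \<xi> \<one> = of_real (nsq G \<xi>)"
proof -
  have "acoef G \<xi> \<xi> \<one> = infsum (\<lambda>g. of_real ((cmod (\<xi> g))^2)) (carrier G)"
    unfolding acoef_def
    by (rule infsum_cong) (simp add: complex_norm_square[symmetric])
  also have "\<dots> = of_real (nsq G \<xi>)"
    unfolding nsq_def
    using has_sum_of_real[OF has_sum_infsum[OF l2_sq[OF assms]]] infsumI by blast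
  finally show ?thesis .
qed

lemma lreg_formula:
  assumes "finite T" "T \<subseteq> carrier G" "\<And>g. f g \<noteq> 0 \<Longrightarrow> g \<in> T" "g \<in> carrier G"
  shows "lreg G f \<xi> g = (\<Sum>h\<in>T. f h * \<xi> (inv h \<otimes> g))"
proof -
  have "lreg G f \<xi> g = (\<Sum>h\<in>{h\<in>carrier G. f h \<noteq> 0}. f h * \<xi> (inv h \<otimes> g))"
    using assms(4) by (simp add: lreg_def)
  also have "\<dots> = (\<Sum>h\<in>T. f h * \<xi> (inv h \<otimes> g))"
    by (rule sum.mono_neutral_left) (use assms in auto)
  finally show ?thesis .
qed

lemma inner_formula:
  assumes "finite T" "T \<subseteq> carrier G" "\<And>g. f g \<noteq> 0 \<Longrightarrow> g \<in> T"
    and "\<xi> \<in> l2 G" "\<eta> \<in> l2 G"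
  shows "l2_inner G (lreg G f \<xi>) \<eta> = (\<Sum>h\<in>T. f h * acoef G \<xi> \<eta> h)"
proof -
  have "l2_inner G (lreg G f \<xi>) \<eta> =
      infsum (\<lambda>g. \<Sum>h\<in>T. f h * (\<xi> (inv h \<otimes> g) * cnj (\<eta> g))) (carrier G)"
    unfolding l2_inner_def
    by (rule infsum_cong) (simp add: lreg_formula[OF assms(1-3)] sum_distrib_right mult.assoc)
  also have "\<dots> = (\<Sum>h\<in>T. infsum (\<lambda>g. f h * (\<xi> (inv h \<otimes> g) * cnj (\<eta> g))) (carrier G))"
    by (rule infsum_finite_sum(1)[OF assms(1)])
       (use assms in \<open>auto intro!: summable_on_cmult_right acoef_summable\<close>)
  also have "\<dots> = (\<Sum>h\<in>T. f h * acoef G \<xi> \<eta> h)"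
    unfolding acoef_def by (simp add: infsum_cmult_right')
  finally show ?thesis .
qed


lemma finsupp_l2:
  assumes "\<And>g. g \<notin> carrier G \<Longrightarrow> \<xi> g = 0" "finite {g. \<xi> g \<noteq> 0}"
  shows "\<xi> \<in> l2 G"
proof -
  have "(\<lambda>g. (cmod (\<xi> g))^2) summable_on carrier G \<longleftrightarrow>
        (\<lambda>g. (cmod (\<xi> g))^2) summable_on {g. \<xi> g \<noteq> 0}"
    by (rule summable_on_cong_neutral) (use assms in auto)
  then show ?thesis using assms by (simp add: l2_def)
qed

lemma inv_eq_one_iff: "h \<in> carrier G \<Longrightarrow> (inv h = \<one>) = (h = \<one>)"
  by (metis inv_inv inv_one)

lemma acoef_unit:
  assumes "h \<in> carrier G"
  shows "acoef G (\<lambda>g. \<alpha> * unit_el G g) (\<lambda>g. \<beta> * unit_el G g) h = (if h = \<one> then \<alpha> * cnj \<beta> else 0)"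
proof -
  have "acoef G (\<lambda>g. \<alpha> * unit_el G g) (\<lambda>g. \<beta> * unit_el G g) h =
     infsum (\<lambda>g. \<alpha> * unit_el G (inv h \<otimes> g) * cnj (\<beta> * unit_el G g)) {\<one>}"
    unfolding acoef_def
    by (rule infsum_cong_neutral) (auto simp: unit_el_def)
  also have "\<dots> = (if h = \<one> then \<alpha> * cnj \<beta> else 0)"
    using assms by (simp add: unit_el_def inv_eq_one_iff)
  finally show ?thesis .
qed

lemma acoef_two:
  fixes c :: complex
  assumes "k \<in> carrier G" "k \<noteq> \<one>" "h \<in> carrier G"
  defines "\<xi> \<equiv> (\<lambda>g. unit_el G g + c * (if g = k then 1 else 0))"
  shows "acoef G \<xi> \<xi> h = (if h = \<one> then 1 + c * cnj c else 0) + (if h = inv k then c else 0)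
                          + (if h = k then cnj c else 0)"
proof -
  have "acoef G \<xi> \<xi> h = infsum (\<lambda>g. \<xi> (inv h \<otimes> g) * cnj (\<xi> g)) {\<one>, k}"
    unfolding acoef_def
    by (rule infsum_cong_neutral) (use assms in \<open>auto simp: unit_el_def \<xi>_def\<close>)
  also have "\<dots> = \<xi> (inv h) * cnj (\<xi> \<one>) + \<xi> (inv h \<otimes> k) * cnj (\<xi> k)"
    using assms by simp
  also have "\<xi> \<one> = 1" using assms by (simp add: \<xi>_def unit_el_def)
  also have "\<xi> k = c" using assms by (simp add: \<xi>_def unit_el_def)
  also have "\<xi> (inv h) = (if h = \<one> then 1 else 0) + (if h = inv k then c else 0)"
    using assms by (auto simp: \<xi>_def unit_el_def inv_eq_one_iff)
  also have "\<xi> (inv h \<otimes> k) = (if h = k then 1 else 0) + (if h = \<one> then c else 0)"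
  proof -
    have e1: "(inv h \<otimes> k = \<one>) = (h = k)"
      using assms by (metis inv_closed inv_inv l_inv inv_equality)
    have e2: "(inv h \<otimes> k = k) = (h = \<one>)"
      using assms by (simp add: inv_eq_one_iff)
    show ?thesis using assms e1 e2 by (auto simp: \<xi>_def unit_el_def)
  qed
  finally show ?thesis using assms by (auto simp: algebra_simps)
qed

end



lemma real_core:
  fixes N R :: "'x \<Rightarrow> real" and U V :: "real set"
  assumes eL: "e \<in> L" and Ne: "N e = 1" and Re: "R e = t"
    and Nnn: "\<And>\<xi>. \<xi> \<in> L \<Longrightarrow> 0 \<le> N \<xi>" and Rnn: "\<And>\<xi>. \<xi> \<in> L \<Longrightarrow> 0 \<le> R \<xi>"
    and RK: "\<And>\<xi>. \<xi> \<in> L \<Longrightarrow> R \<xi> \<le> K * N \<xi>" and r0: "0 \<le> r"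
    and U: "U = {s. \<forall>\<xi>\<in>L. 0 \<le> (s + t) * N \<xi> + - 1 * R \<xi>}"
    and V: "V = {s. \<forall>\<xi>\<in>L. 0 \<le> (s - t) * N \<xi> + 1 * R \<xi>}"
    and rho: "max (Inf U / Inf V) (Inf V / Inf U) \<le> r"
  shows "(\<forall>\<xi>\<in>L. 0 \<le> (0 - t) * N \<xi> + 1 * R \<xi>) \<or> (\<forall>\<xi>\<in>L. 0 \<le> ((1 + r) * t) * N \<xi> + - 1 * R \<xi>)"
proof -
  have t0: "0 \<le> t" using Rnn[OF eL] Re by simp
  have Ulb: "0 \<le> s" if "s \<in> U" for s using that eL Ne Re unfolding U by force
  have Vlb: "0 \<le> s" if "s \<in> V" for s using that eL Ne Re unfolding V by force
  define K' where "K' = max K 0"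
  have KU: "K' \<in> U" unfolding U
  proof (intro CollectI ballI)
    fix \<xi> assume "\<xi> \<in> L"
    have "K * N \<xi> \<le> K' * N \<xi>" unfolding K'_def
      using Nnn[OF \<open>\<xi> \<in> L\<close>] by (intro mult_right_mono) auto
    then have "R \<xi> \<le> K' * N \<xi>" "0 \<le> t * N \<xi>"
      using RK[OF \<open>\<xi> \<in> L\<close>] Nnn[OF \<open>\<xi> \<in> L\<close>] t0 by auto
    then show "0 \<le> (K' + t) * N \<xi> + - 1 * R \<xi>" by (simp add: algebra_simps)
  qed
  have tV: "t \<in> V" unfolding V using Rnn by simp
  have bU: "bdd_below U" using Ulb by (meson bdd_below.I)
  have bV: "bdd_below V" using Vlb by (meson bdd_below.I)
  define a where "a = Inf U"
  define b where "b = Inf V"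
  have aU: "a \<in> U" unfolding U
  proof (intro CollectI ballI)
    fix \<xi> assume xL: "\<xi> \<in> L"
    show "0 \<le> (a + t) * N \<xi> + - 1 * R \<xi>"
    proof (cases "N \<xi> = 0")
      case True
      then show ?thesis using KU xL unfolding U by auto
    next
      case False
      then have Np: "0 < N \<xi>" using Nnn[OF xL] by simp
      have "R \<xi> / N \<xi> - t \<le> a" unfolding a_def
      proof (rule cInf_greatest)
        show "U \<noteq> {}" using KU by auto
        fix s assume "s \<in> U"
        then have "R \<xi> \<le> (s + t) * N \<xi>" using xL unfolding U by auto
        then have "R \<xi> / N \<xi> \<le> s + t" using Np by (simp add: pos_divide_le_eq)
        then show "R \<xi> / N \<xi> - t \<le> s" by simp
      qed
      then have "R \<xi> / N \<xi> \<le> a + t" by simp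
      then have "R \<xi> \<le> (a + t) * N \<xi>" using Np by (simp add: pos_divide_le_eq)
      then show ?thesis by simp
    qed
  qed
  have bVm: "b \<in> V" unfolding V
  proof (intro CollectI ballI)
    fix \<xi> assume xL: "\<xi> \<in> L"
    show "0 \<le> (b - t) * N \<xi> + 1 * R \<xi>"
    proof (cases "N \<xi> = 0")
      case True
      then show ?thesis using Rnn[OF xL] by auto
    next
      case False
      then have Np: "0 < N \<xi>" using Nnn[OF xL] by simp
      have "t - R \<xi> / N \<xi> \<le> b" unfolding b_def
      proof (rule cInf_greatest)
        show "V \<noteq> {}" using tV by auto
        fix s assume "s \<in> V"
        then have "(t - s) * N \<xi> \<le> R \<xi>" using xL unfolding V by (auto simp: algebra_simps)
        then have "t - s \<le> R \<xi> / N \<xi>" using Np by (simp add: pos_le_divide_eq)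
        then show "t - R \<xi> / N \<xi> \<le> s" by simp
      qed
      then have "t - b \<le> R \<xi> / N \<xi>" by simp
      then have "(t - b) * N \<xi> \<le> R \<xi>" using Np by (simp add: pos_le_divide_eq)
      then show ?thesis by (simp add: algebra_simps)
    qed
  qed
  have bt: "b \<le> t" unfolding b_def by (rule cInf_lower[OF tV bV])
  have b0: "0 \<le> b" using Vlb[OF bVm] .
  show ?thesis
  proof (cases "b = 0")
    case True
    then show ?thesis using bVm unfolding V by auto
  next
    case False
    then have bp: "0 < b" using b0 by simp
    have "a / b \<le> r" using rho unfolding a_def[symmetric] b_def[symmetric] by simp
    then have "a \<le> r * b" using bp by (simp add: divide_le_eq)
    also have "\<dots> \<le> r * t" using bt r0 by (simp add: mult_left_mono)
    finally have art: "a \<le> r * t" .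
    have "\<forall>\<xi>\<in>L. 0 \<le> ((1 + r) * t) * N \<xi> + - 1 * R \<xi>"
    proof
      fix \<xi> assume xL: "\<xi> \<in> L"
      have "0 \<le> (a + t) * N \<xi> + - 1 * R \<xi>" using aU xL unfolding U by auto
      moreover have "(a + t) * N \<xi> \<le> ((1 + r) * t) * N \<xi>"
        using art Nnn[OF xL] by (intro mult_right_mono) (auto simp: algebra_simps)
      ultimately show "0 \<le> ((1 + r) * t) * N \<xi> + - 1 * R \<xi>" by linarith
    qed
    then show ?thesis by blast
  qed
qed


context group begin

lemma XS_supp: "x \<in> XS G S \<Longrightarrow> x g \<noteq> 0 \<Longrightarrow> g \<in> insert \<one> S"
  by (auto simp: XS_def)

lemma XS_car: "x \<in> XS G S \<Longrightarrow> g \<notin> carrier G \<Longrightarrow> x g = 0"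
  by (auto simp: XS_def fin_supp_def)

lemma sum_unit_el: "finite T \<Longrightarrow> \<one> \<in> T \<Longrightarrow> (\<Sum>h\<in>T. unit_el G h * A h) = A \<one>"
  by (simp add: unit_el_def if_distrib[of "\<lambda>z. z * _"] sum.delta' cong: if_cong)

lemma combo_inner:
  assumes SG: "S \<subseteq> carrier G" and fS: "finite S" and xX: "x \<in> XS G S" and xl: "\<xi> \<in> l2 G"
  shows "l2_inner G (lreg G (\<lambda>g. a * unit_el G g + b * x g) \<xi>) \<xi>
       = a * of_real (nsq G \<xi>) + b * (\<Sum>h\<in>insert \<one> S. x h * acoef G \<xi> \<xi> h)"
proof -
  have "l2_inner G (lreg G (\<lambda>g. a * unit_el G g + b * x g) \<xi>) \<xi>
      = (\<Sum>h\<in>insert \<one> S. (a * unit_el G h + b * x h) * acoef G \<xi> \<xi> h)"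
  proof (rule inner_formula)
    show "finite (insert \<one> S)" using fS by simp
    show "insert \<one> S \<subseteq> carrier G" using SG by simp
    fix g assume "a * unit_el G g + b * x g \<noteq> 0"
    then show "g \<in> insert \<one> S" using XS_supp[OF xX, of g] by (auto simp: unit_el_def split: if_splits)
  qed (use xl in auto)
  also have "\<dots> = a * (\<Sum>h\<in>insert \<one> S. unit_el G h * acoef G \<xi> \<xi> h)
                  + b * (\<Sum>h\<in>insert \<one> S. x h * acoef G \<xi> \<xi> h)"
    by (simp add: distrib_right sum.distrib sum_distrib_left mult.assoc)
  also have "(\<Sum>h\<in>insert \<one> S. unit_el G h * acoef G \<xi> \<xi> h) = acoef G \<xi> \<xi> \<one>"
    using fS by (intro sum_unit_el) auto
  also have "\<dots> = of_real (nsq G \<xi>)" by (rule acoef_one[OF xl])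
  finally show ?thesis .
qed

end


context group begin

lemma Q_two:
  fixes c :: complex
  assumes SG: "S \<subseteq> carrier G" and fS: "finite S" and xX: "x \<in> XS G S"
    and kG: "k \<in> carrier G" and k1: "k \<noteq> \<one>"
  defines "\<xi> \<equiv> (\<lambda>g. unit_el G g + c * (if g = k then 1 else 0))"
  shows "\<xi> \<in> l2 G" and "nsq G \<xi> = 1 + (cmod c)^2"
    and "(\<Sum>h\<in>insert \<one> S. x h * acoef G \<xi> \<xi> h) = x \<one> * (1 + c * cnj c) + x (inv k) * c + x k * cnj c"
proof -
  show xl: "\<xi> \<in> l2 G"
  proof (rule finsupp_l2)
    show "\<xi> g = 0" if "g \<notin> carrier G" for g using that kG by (auto simp: \<xi>_def unit_el_def)
    have "{g. \<xi> g \<noteq> 0} \<subseteq> {\<one>, k}" by (auto simp: \<xi>_def unit_el_def split: if_splits)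
    then show "finite {g. \<xi> g \<noteq> 0}" by (rule finite_subset) simp
  qed
  have ik1: "inv k \<noteq> \<one>" using kG k1 inv_eq_one_iff by blast
  have "of_real (nsq G \<xi>) = acoef G \<xi> \<xi> \<one>" using acoef_one[OF xl] by simp
  also have "\<dots> = 1 + c * cnj c"
    using acoef_two[OF kG k1, of \<one> c] ik1 k1 unfolding \<xi>_def by simp
  also have "\<dots> = of_real (1 + (cmod c)^2)" by (simp add: complex_norm_square[symmetric])
  finally show "nsq G \<xi> = 1 + (cmod c)^2" using of_real_eq_iff by blast
  define T where "T = insert k (insert (inv k) (insert \<one> S))"
  have fT: "finite T" using fS by (simp add: T_def)
  have TG: "T \<subseteq> carrier G" using SG kG by (auto simp: T_def)
  have "(\<Sum>h\<in>insert \<one> S. x h * acoef G \<xi> \<xi> h) = (\<Sum>h\<in>T. x h * acoef G \<xi> \<xi> h)"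
    by (rule sum.mono_neutral_left) (use fT XS_supp[OF xX] in \<open>auto simp: T_def\<close>)
  also have "\<dots> = (\<Sum>h\<in>T. (if h = \<one> then x h * (1 + c * cnj c) else 0)
                        + (if h = inv k then x h * c else 0) + (if h = k then x h * cnj c else 0))"
  proof (rule sum.cong[OF refl])
    fix h assume "h \<in> T"
    then have "h \<in> carrier G" using TG by auto
    then show "x h * acoef G \<xi> \<xi> h = (if h = \<one> then x h * (1 + c * cnj c) else 0)
                        + (if h = inv k then x h * c else 0) + (if h = k then x h * cnj c else 0)"
      using acoef_two[OF kG k1, of h c] unfolding \<xi>_def[symmetric] by (simp add: distrib_left)
  qed
  also have "\<dots> = x \<one> * (1 + c * cnj c) + x (inv k) * c + x k * cnj c"
    using fT by (simp add: sum.distrib sum.delta T_def)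
  finally show "(\<Sum>h\<in>insert \<one> S. x h * acoef G \<xi> \<xi> h) = x \<one> * (1 + c * cnj c) + x (inv k) * c + x k * cnj c" .
qed

end


context group begin

lemma core:
  assumes SG: "S \<subseteq> carrier G" and fS: "finite S" and xX: "x \<in> XS G S"
    and posx: "pos_elem G x" and r0: "0 \<le> r"
    and rb: "\<And>f. f \<in> XS G S \<Longrightarrow> self_adj G f \<Longrightarrow> (\<exists>g. f g \<noteq> 0) \<Longrightarrow> f \<one> = 0 \<Longrightarrow> rho_el G f \<le> r"
  shows "pos_elem G (\<lambda>g. of_real (1 + r) * x \<one> * unit_el G g - x g)"
proof -
  define Q where "Q \<xi> = (\<Sum>h\<in>insert \<one> S. x h * acoef G \<xi> \<xi> h)" for \<xi>
  have ci: "l2_inner G (lreg G (\<lambda>g. a * unit_el G g + b * x g) \<xi>) \<xi> = a * of_real (nsq G \<xi>) + b * Q \<xi>"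
    if "\<xi> \<in> l2 G" for a b \<xi> using combo_inner[OF SG fS xX that] unfolding Q_def .
  have inner_x: "l2_inner G (lreg G x \<xi>) \<xi> = Q \<xi>" if "\<xi> \<in> l2 G" for \<xi>
    using ci[OF that, of 0 1] by simp
  have Qnn: "nonneg_c (Q \<xi>)" if "\<xi> \<in> l2 G" for \<xi>
    using posx that inner_x[OF that] unfolding pos_elem_def by metis
  have ImQ: "Im (Q \<xi>) = 0" and ReQ: "0 \<le> Re (Q \<xi>)" if "\<xi> \<in> l2 G" for \<xi>
    using Qnn[OF that] by (auto simp: nonneg_c_def)
  have posform: "pos_elem G (\<lambda>g. of_real a * unit_el G g + of_real b * x g)
        \<longleftrightarrow> (\<forall>\<xi>\<in>l2 G. 0 \<le> a * nsq G \<xi> + b * Re (Q \<xi>))" for a b :: real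
    unfolding pos_elem_def using ci ImQ by (simp add: nonneg_c_def)
  define e where "e = unit_el G"
  have el: "e \<in> l2 G"
    by (rule finsupp_l2) (auto simp: e_def unit_el_def)
  have e1: "e = (\<lambda>g. 1 * unit_el G g)" by (simp add: e_def)
  have acoef_e: "acoef G e e h = (if h = \<one> then 1 else 0)" if "h \<in> carrier G" for h
    using acoef_unit[OF that, of 1 1] e1 by simp
  have Ne: "nsq G e = 1" using acoef_one[OF el] acoef_e[of \<one>] by simp
  have Qe: "Q e = x \<one>"
  proof -
    have "Q e = (\<Sum>h\<in>insert \<one> S. x h * (if h = \<one> then 1 else 0))"
      unfolding Q_def by (rule sum.cong[OF refl]) (use SG acoef_e in auto)
    also have "\<dots> = x \<one>" using fS by (simp add: if_distrib[of "\<lambda>z. _ * z"] sum.delta' cong: if_cong)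
    finally show ?thesis .
  qed
  define t where "t = Re (x \<one>)"
  have xt: "x \<one> = of_real t" using ImQ[OF el] Qe by (simp add: t_def complex_eq_iff)
  have t0: "0 \<le> t" using ReQ[OF el] Qe t_def by simp
  define K where "K = (\<Sum>h\<in>insert \<one> S. cmod (x h) * 2)"
  have RK: "Re (Q \<xi>) \<le> K * nsq G \<xi>" if xl: "\<xi> \<in> l2 G" for \<xi>
  proof -
    have "Re (Q \<xi>) \<le> cmod (Q \<xi>)" by (rule complex_Re_le_cmod)
    also have "\<dots> \<le> (\<Sum>h\<in>insert \<one> S. cmod (x h * acoef G \<xi> \<xi> h))"
      unfolding Q_def by (rule norm_sum)
    also have "\<dots> \<le> (\<Sum>h\<in>insert \<one> S. cmod (x h) * (2 * nsq G \<xi>))"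
    proof (rule sum_mono)
      fix h assume "h \<in> insert \<one> S"
      then have "h \<in> carrier G" using SG by auto
      then have "cmod (acoef G \<xi> \<xi> h) \<le> 2 * nsq G \<xi>" using acoef_bound[OF xl xl] by simp
      then show "cmod (x h * acoef G \<xi> \<xi> h) \<le> cmod (x h) * (2 * nsq G \<xi>)"
        by (simp add: norm_mult mult_left_mono)
    qed
    also have "\<dots> = K * nsq G \<xi>" unfolding K_def by (simp add: sum_distrib_right mult.assoc)
    finally show ?thesis .
  qed
  have goal_eq: "(\<lambda>g. of_real (1 + r) * x \<one> * unit_el G g - x g)
       = (\<lambda>g. of_real ((1 + r) * t) * unit_el G g + of_real (- 1) * x g)"
    by (simp add: xt)
  define x0 where "x0 = (\<lambda>g. x g - of_real t * unit_el G g)"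
  show ?thesis
  proof (cases "\<forall>g. x0 g = 0")
    case True
    then have xe: "x g = of_real t * unit_el G g" for g unfolding x0_def by (metis eq_iff_diff_eq_0)
    have "Re (Q \<xi>) = t * nsq G \<xi>" if "\<xi> \<in> l2 G" for \<xi>
    proof -
      have "Q \<xi> = of_real t * (\<Sum>h\<in>insert \<one> S. unit_el G h * acoef G \<xi> \<xi> h)"
        unfolding Q_def xe by (simp add: sum_distrib_left mult.assoc)
      also have "\<dots> = of_real t * acoef G \<xi> \<xi> \<one>" using fS by (subst sum_unit_el) auto
      finally show ?thesis using acoef_one[OF that] by simp
    qed
    then show ?thesis unfolding goal_eq posform
      using r0 t0 nsq_nonneg by (auto simp: algebra_simps)
  next
    case False
    then obtain g0 where g0: "x0 g0 \<noteq> 0" by auto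
    have x0car: "x0 g = 0" if "g \<notin> carrier G" for g
      using that XS_car[OF xX that] by (auto simp: x0_def unit_el_def)
    have x01: "x0 \<one> = 0" by (simp add: x0_def xt unit_el_def)
    have x0k: "x0 k = x k" if "k \<noteq> \<one>" for k using that by (simp add: x0_def unit_el_def)
    have g0G: "g0 \<in> carrier G" and g01: "g0 \<noteq> \<one>" using g0 x0car x01 by auto
    have sa: "x (inv k) = cnj (x k)" if kG: "k \<in> carrier G" and k1: "k \<noteq> \<one>" for k
    proof -
      let ?\<xi> = "\<lambda>c. (\<lambda>g. unit_el G g + c * (if g = k then 1 else 0))"
      have "Im (Q (?\<xi> 1)) = 0" using ImQ[OF Q_two(1)[OF SG fS xX kG k1, of 1]] .
      then have h1: "Im (x (inv k)) + Im (x k) = 0"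
        using Q_two(3)[OF SG fS xX kG k1, of 1] unfolding Q_def[symmetric] by (simp add: xt)
      have "Im (Q (?\<xi> \<i>)) = 0" using ImQ[OF Q_two(1)[OF SG fS xX kG k1, of \<i>]] .
      then have h2: "Re (x (inv k)) - Re (x k) = 0"
        using Q_two(3)[OF SG fS xX kG k1, of \<i>] unfolding Q_def[symmetric] by (simp add: xt)
      show ?thesis using h1 h2 by (simp add: complex_eq_iff)
    qed
    have x0X: "x0 \<in> XS G S"
    proof -
      have sub: "{g. x0 g \<noteq> 0} \<subseteq> insert \<one> S"
        using XS_supp[OF xX] by (auto simp: x0_def unit_el_def split: if_splits)
      then have "finite {g. x0 g \<noteq> 0}" using fS finite_subset by blast
      then show ?thesis using sub x0car unfolding XS_def fin_supp_def by auto
    qed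
    have x0sa: "self_adj G x0" unfolding self_adj_def
    proof
      fix g assume gG: "g \<in> carrier G"
      show "x0 (inv g) = cnj (x0 g)"
      proof (cases "g = \<one>")
        case True then show ?thesis using x01 by simp
      next
        case False
        then have "inv g \<noteq> \<one>" using gG inv_eq_one_iff by blast
        then show ?thesis using False x0k sa[OF gG False] by simp
      qed
    qed
    have rho: "rho_el G x0 \<le> r" using rb[OF x0X x0sa _ x01] g0 by blast
    have pU: "pos_elem G (\<lambda>g. of_real s * unit_el G g - x0 g) \<longleftrightarrow>
        (\<forall>\<xi>\<in>l2 G. 0 \<le> (s + t) * nsq G \<xi> + - 1 * Re (Q \<xi>))" for s
    proof -
      have "(\<lambda>g. of_real s * unit_el G g - x0 g) = (\<lambda>g. of_real (s + t) * unit_el G g + of_real (- 1) * x g)"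
        by (auto simp: x0_def algebra_simps)
      then show ?thesis using posform[of "s + t" "- 1"] by metis
    qed
    have pV: "pos_elem G (\<lambda>g. of_real s * unit_el G g + x0 g) \<longleftrightarrow>
        (\<forall>\<xi>\<in>l2 G. 0 \<le> (s - t) * nsq G \<xi> + 1 * Re (Q \<xi>))" for s
    proof -
      have "(\<lambda>g. of_real s * unit_el G g + x0 g) = (\<lambda>g. of_real (s - t) * unit_el G g + of_real 1 * x g)"
        by (auto simp: x0_def algebra_simps)
      then show ?thesis using posform[of "s - t" "1"] by metis
    qed
    have U: "upper_const G x0 = Inf {s. \<forall>\<xi>\<in>l2 G. 0 \<le> (s + t) * nsq G \<xi> + - 1 * Re (Q \<xi>)}"
      unfolding upper_const_def by (simp only: pU)
    have V: "lower_const G x0 = Inf {s. \<forall>\<xi>\<in>l2 G. 0 \<le> (s - t) * nsq G \<xi> + 1 * Re (Q \<xi>)}"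
      unfolding lower_const_def by (simp only: pV)
    have disj: "(\<forall>\<xi>\<in>l2 G. 0 \<le> (0 - t) * nsq G \<xi> + 1 * Re (Q \<xi>)) \<or>
          (\<forall>\<xi>\<in>l2 G. 0 \<le> ((1 + r) * t) * nsq G \<xi> + - 1 * Re (Q \<xi>))"
    proof (rule real_core[where e = e and N = "nsq G" and R = "\<lambda>\<xi>. Re (Q \<xi>)" and K = K and r = r])
      show "max (Inf {s. \<forall>\<xi>\<in>l2 G. 0 \<le> (s + t) * nsq G \<xi> + - 1 * Re (Q \<xi>)} / Inf {s. \<forall>\<xi>\<in>l2 G. 0 \<le> (s - t) * nsq G \<xi> + 1 * Re (Q \<xi>)})
                (Inf {s. \<forall>\<xi>\<in>l2 G. 0 \<le> (s - t) * nsq G \<xi> + 1 * Re (Q \<xi>)} / Inf {s. \<forall>\<xi>\<in>l2 G. 0 \<le> (s + t) * nsq G \<xi> + - 1 * Re (Q \<xi>)}) \<le> r"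
        using rho unfolding rho_el_def U V .
    qed (use el Ne Qe t_def nsq_nonneg ReQ RK r0 in auto)
    show ?thesis
    proof (cases "\<forall>\<xi>\<in>l2 G. 0 \<le> (0 - t) * nsq G \<xi> + 1 * Re (Q \<xi>)")
      case True
      define c where "c = - x g0"
      have "0 \<le> (0 - t) * nsq G (\<lambda>g. unit_el G g + c * (if g = g0 then 1 else 0))
                + 1 * Re (Q (\<lambda>g. unit_el G g + c * (if g = g0 then 1 else 0)))"
        using True Q_two(1)[OF SG fS xX g0G g01, of c] by blast
      also have "\<dots> = - 2 * (cmod (x g0))^2"
      proof -
        let ?\<xi> = "\<lambda>g. unit_el G g + c * (if g = g0 then 1 else 0)"
        have "Q ?\<xi> = of_real t + of_real t * (of_real (cmod (x g0)))^2 - 2 * (of_real (cmod (x g0)))^2"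
          using Q_two(3)[OF SG fS xX g0G g01, of c] sa[OF g0G g01] unfolding Q_def[symmetric]
          by (simp add: xt c_def algebra_simps complex_norm_square[symmetric])
        also have "\<dots> = of_real (t + t * (cmod (x g0))^2 - 2 * (cmod (x g0))^2)" by simp
        finally have "Re (Q ?\<xi>) = t + t * (cmod (x g0))^2 - 2 * (cmod (x g0))^2"
          by (simp only: Re_complex_of_real)
        moreover have "nsq G ?\<xi> = 1 + (cmod (x g0))^2" using Q_two(2)[OF SG fS xX g0G g01, of c] by (simp add: c_def)
        ultimately show ?thesis by (simp add: algebra_simps)
      qed
      finally have "x g0 = 0" by simp
      then show ?thesis using g0 x0k[OF g01] by simp
    next
      case False
      then show ?thesis using disj unfolding goal_eq posform by auto
    qed
  qed
qed

end


lemma complex_nonneg_iff: "nonneg_c z \<longleftrightarrow> 0 \<le> z"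
  by (auto simp: nonneg_c_def less_eq_complex_def)

context group begin

lemma acoef_one_gen: "acoef G \<eta> \<zeta> \<one> = infsum (\<lambda>g. \<eta> g * cnj (\<zeta> g)) (carrier G)"
  unfolding acoef_def by (rule infsum_cong) simp

lemma phi_inner:
  assumes "\<eta> \<in> l2 G" "\<zeta> \<in> l2 G"
  shows "l2_inner G (lreg G (\<lambda>g. m * unit_el G g) \<eta>) \<zeta> = m * infsum (\<lambda>g. \<eta> g * cnj (\<zeta> g)) (carrier G)"
proof -
  have "l2_inner G (lreg G (\<lambda>g. m * unit_el G g) \<eta>) \<zeta> = (\<Sum>h\<in>{\<one>}. m * unit_el G h * acoef G \<eta> \<zeta> h)"
    by (rule inner_formula) (use assms in \<open>auto simp: unit_el_def split: if_splits\<close>)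
  then show ?thesis by (simp add: unit_el_def acoef_one_gen)
qed

lemma cp_phi:
  assumes SG: "S \<subseteq> carrier G" and fS: "finite S" and cc0: "0 \<le> cc"
  shows "cp_map G (XS G S) (\<lambda>x g. of_real cc * x \<one> * unit_el G g)"
  unfolding cp_map_def
proof (intro conjI allI impI ballI)
  show "(\<lambda>x g. of_real cc * x \<one> * unit_el G g) ` XS G S \<subseteq> XS G S"
  proof
    fix y assume "y \<in> (\<lambda>x g. of_real cc * x \<one> * unit_el G g) ` XS G S"
    then obtain x where y: "y = (\<lambda>g. of_real cc * x \<one> * unit_el G g)" by auto
    have "{g. y g \<noteq> 0} \<subseteq> {\<one>}" by (auto simp: y unit_el_def split: if_splits)
    then have "finite {g. y g \<noteq> 0}" by (rule finite_subset) simp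
    then show "y \<in> XS G S" by (auto simp: XS_def fin_supp_def y unit_el_def)
  qed
next
  fix x y c assume "x \<in> XS G S" "y \<in> XS G S"
  show "(\<lambda>g. of_real cc * (c * x \<one> + y \<one>) * unit_el G g) =
        (\<lambda>g. c * (of_real cc * x \<one> * unit_el G g) + of_real cc * y \<one> * unit_el G g)"
    by (simp add: algebra_simps)
next
  fix n F assume FX: "\<forall>i<n. \<forall>j<n. F i j \<in> XS G S" and pF: "pos_mat G n F"
  show "pos_mat G n (\<lambda>i j g. of_real cc * F i j \<one> * unit_el G g)"
    unfolding pos_mat_def
  proof (intro allI impI)
    fix \<xi> :: "nat \<Rightarrow> 'a \<Rightarrow> complex" assume xl: "\<forall>i<n. \<xi> i \<in> l2 G"
    define M where "M i j = F i j \<one>" for i j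
    define w where "w g = (\<Sum>i<n. \<Sum>j<n. of_real cc * M i j * (\<xi> j g * cnj (\<xi> i g)))" for g
    have sm: "(\<lambda>g. \<xi> j g * cnj (\<xi> i g)) summable_on carrier G" if "i < n" "j < n" for i j
      using l2_prod_summable(1)[OF l2_sq l2_sq] xl that by blast
    have inner_i: "(\<Sum>j<n. l2_inner G (lreg G (\<lambda>g. of_real cc * F i j \<one> * unit_el G g) (\<xi> j)) (\<xi> i))
          = infsum (\<lambda>g. \<Sum>j<n. of_real cc * M i j * (\<xi> j g * cnj (\<xi> i g))) (carrier G)"
      and sm_i: "(\<lambda>g. \<Sum>j<n. of_real cc * M i j * (\<xi> j g * cnj (\<xi> i g))) summable_on carrier G"
      if "i < n" for i
    proof -
      have "(\<Sum>j<n. l2_inner G (lreg G (\<lambda>g. of_real cc * F i j \<one> * unit_el G g) (\<xi> j)) (\<xi> i))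
          = (\<Sum>j<n. infsum (\<lambda>g. of_real cc * M i j * (\<xi> j g * cnj (\<xi> i g))) (carrier G))"
        using phi_inner xl that by (simp add: M_def infsum_cmult_right')
      also have "\<dots> = infsum (\<lambda>g. \<Sum>j<n. of_real cc * M i j * (\<xi> j g * cnj (\<xi> i g))) (carrier G)"
        by (rule infsum_finite_sum(1)[symmetric]) (use sm that in \<open>auto intro: summable_on_cmult_right\<close>)
      finally show "(\<Sum>j<n. l2_inner G (lreg G (\<lambda>g. of_real cc * F i j \<one> * unit_el G g) (\<xi> j)) (\<xi> i))
          = infsum (\<lambda>g. \<Sum>j<n. of_real cc * M i j * (\<xi> j g * cnj (\<xi> i g))) (carrier G)" .
      show "(\<lambda>g. \<Sum>j<n. of_real cc * M i j * (\<xi> j g * cnj (\<xi> i g))) summable_on carrier G"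
        by (rule infsum_finite_sum(2)) (use sm that in \<open>auto intro: summable_on_cmult_right\<close>)
    qed
    have tot: "(\<Sum>i<n. \<Sum>j<n. l2_inner G (lreg G (\<lambda>g. of_real cc * F i j \<one> * unit_el G g) (\<xi> j)) (\<xi> i))
        = infsum w (carrier G)"
    proof -
      have "(\<Sum>i<n. \<Sum>j<n. l2_inner G (lreg G (\<lambda>g. of_real cc * F i j \<one> * unit_el G g) (\<xi> j)) (\<xi> i))
          = (\<Sum>i<n. infsum (\<lambda>g. \<Sum>j<n. of_real cc * M i j * (\<xi> j g * cnj (\<xi> i g))) (carrier G))"
        using inner_i by simp
      also have "\<dots> = infsum w (carrier G)"
        unfolding w_def by (rule infsum_finite_sum(1)[symmetric]) (use sm_i in auto)
      finally show ?thesis .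
    qed
    have wsum: "w summable_on carrier G"
      unfolding w_def by (rule infsum_finite_sum(2)) (use sm_i in auto)
    have wnn: "0 \<le> w g" if gG: "g \<in> carrier G" for g
    proof -
      define \<eta> where "\<eta> i = (\<lambda>h. \<xi> i g * unit_el G h)" for i
      have \<eta>l: "\<eta> i \<in> l2 G" for i
        by (rule finsupp_l2) (auto simp: \<eta>_def unit_el_def)
      have "nonneg_c (\<Sum>i<n. \<Sum>j<n. l2_inner G (lreg G (F i j) (\<eta> j)) (\<eta> i))"
        using pF \<eta>l unfolding pos_mat_def by blast
      also have "(\<Sum>i<n. \<Sum>j<n. l2_inner G (lreg G (F i j) (\<eta> j)) (\<eta> i))
          = (\<Sum>i<n. \<Sum>j<n. M i j * (\<xi> j g * cnj (\<xi> i g)))"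
      proof (intro sum.cong refl)
        fix i j assume ij: "i \<in> {..<n}" "j \<in> {..<n}"
        have Fij: "F i j \<in> XS G S" using FX ij by auto
        have "l2_inner G (lreg G (F i j) (\<eta> j)) (\<eta> i) = (\<Sum>h\<in>insert \<one> S. F i j h * acoef G (\<eta> j) (\<eta> i) h)"
          by (rule inner_formula) (use fS SG \<eta>l XS_supp[OF Fij] in auto)
        also have "\<dots> = (\<Sum>h\<in>insert \<one> S. F i j h * (if h = \<one> then \<xi> j g * cnj (\<xi> i g) else 0))"
          by (rule sum.cong[OF refl]) (use SG acoef_unit in \<open>auto simp: \<eta>_def\<close>)
        also have "\<dots> = M i j * (\<xi> j g * cnj (\<xi> i g))"
          using fS by (simp add: M_def if_distrib[of "\<lambda>z. _ * z"] sum.delta' cong: if_cong)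
        finally show "l2_inner G (lreg G (F i j) (\<eta> j)) (\<eta> i) = M i j * (\<xi> j g * cnj (\<xi> i g))" .
      qed
      finally have "0 \<le> (\<Sum>i<n. \<Sum>j<n. M i j * (\<xi> j g * cnj (\<xi> i g)))"
        by (simp add: complex_nonneg_iff)
      moreover have "w g = of_real cc * (\<Sum>i<n. \<Sum>j<n. M i j * (\<xi> j g * cnj (\<xi> i g)))"
        by (simp add: w_def sum_distrib_left mult.assoc)
      moreover have "(0::complex) \<le> of_real cc" using cc0 by (simp add: less_eq_complex_def)
      ultimately show ?thesis by (simp add: mult_nonneg_nonneg)
    qed
    have "0 \<le> infsum w (carrier G)" by (rule infsum_nonneg_complex[OF wsum wnn])
    then show "nonneg_c (\<Sum>i<n. \<Sum>j<n. l2_inner G (lreg G (\<lambda>g. of_real cc * F i j \<one> * unit_el G g) (\<xi> j)) (\<xi> i))"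
      using tot by (simp add: complex_nonneg_iff)
  qed
qed

end


context group begin

lemma opnorm_phi:
  assumes cc0: "0 \<le> cc"
  shows "op_norm G (\<lambda>g. of_real cc * unit_el G g) \<le> cc"
  unfolding op_norm_def
proof (rule cSup_least)
  have "(\<lambda>_. 0) \<in> l2 G" by (simp add: l2_def)
  moreover have "l2_norm G (\<lambda>_. 0) \<le> 1" by (simp add: l2_norm_def)
  ultimately show "{l2_norm G (lreg G (\<lambda>g. of_real cc * unit_el G g) \<xi>) | \<xi>. \<xi> \<in> l2 G \<and> l2_norm G \<xi> \<le> 1} \<noteq> {}"
    by blast
next
  fix y assume "y \<in> {l2_norm G (lreg G (\<lambda>g. of_real cc * unit_el G g) \<xi>) | \<xi>. \<xi> \<in> l2 G \<and> l2_norm G \<xi> \<le> 1}"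
  then obtain \<xi> where y: "y = l2_norm G (lreg G (\<lambda>g. of_real cc * unit_el G g) \<xi>)"
    and xl: "\<xi> \<in> l2 G" and n1: "l2_norm G \<xi> \<le> 1" by blast
  have lr: "lreg G (\<lambda>g. of_real cc * unit_el G g) \<xi> g = of_real cc * \<xi> g" for g
  proof (cases "g \<in> carrier G")
    case True
    have "lreg G (\<lambda>g. of_real cc * unit_el G g) \<xi> g = (\<Sum>h\<in>{\<one>}. of_real cc * unit_el G h * \<xi> (inv h \<otimes> g))"
      by (rule lreg_formula) (use True in \<open>auto simp: unit_el_def split: if_splits\<close>)
    then show ?thesis using True by (simp add: unit_el_def)
  next
    case False
    then show ?thesis using xl by (simp add: lreg_def l2_def)
  qed
  have "y = sqrt (infsum (\<lambda>g. cc^2 * (cmod (\<xi> g))^2) (carrier G))"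
    unfolding y l2_norm_def lr by (simp add: norm_mult power_mult_distrib abs_of_nonneg cc0)
  also have "\<dots> = sqrt (cc^2 * infsum (\<lambda>g. (cmod (\<xi> g))^2) (carrier G))"
    by (simp add: infsum_cmult_right')
  also have "\<dots> = cc * l2_norm G \<xi>"
    by (simp add: l2_norm_def real_sqrt_mult cc0)
  also have "\<dots> \<le> cc" using n1 cc0 by (simp add: mult_left_le)
  finally show "y \<le> cc" .
qed

end

theorem proposition4p9:
  fixes G :: "('a, 'b) monoid_scheme" and S :: "'a set"
  assumes "group G"
    and "countable (carrier G)"
    and "S \<subseteq> carrier G"
    and "finite S"
    and "\<forall>s\<in>S. inv\<^bsub>G\<^esub> s \<in> S"
    and "generate G S = carrier G"
  shows "Ind G (XS G S) (scalars G) \<le> 1 + rho_S G S"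
proof -
  interpret group G by fact
  have rho0: "0 \<le> rho_S G S" unfolding rho_S_def by (rule Sup_upper) simp
  show ?thesis
  proof (cases "rho_S G S = \<infinity>")
    case True
    then show ?thesis by simp
  next
    case False
    then obtain r where rS: "rho_S G S = ereal r" using rho0 by (cases "rho_S G S") auto
    have r0: "0 \<le> r" using rho0 rS by simp
    have rb: "rho_el G f \<le> r" if "f \<in> XS G S" "self_adj G f" "\<exists>g. f g \<noteq> 0" "f \<one>\<^bsub>G\<^esub> = 0" for f
    proof -
      have "ereal (rho_el G f) \<le> rho_S G S" unfolding rho_S_def
        by (rule Sup_upper) (use that in blast)
      then show ?thesis using rS by simp
    qed
    define \<phi> where "\<phi> = (\<lambda>x g. of_real (1 + r) * x \<one>\<^bsub>G\<^esub> * unit_el G g)"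
    have sc: "\<phi> y \<in> scalars G" for y unfolding \<phi>_def scalars_def by auto
    have cp: "\<phi> \<in> CP1 G (XS G S)"
      unfolding CP1_def using cp_phi[OF assms(3,4), of "1 + r"] r0 sc unfolding \<phi>_def by auto
    have pos: "\<forall>x\<in>XS G S. pos_elem G x \<longrightarrow> pos_elem G (\<lambda>g. \<phi> x g - x g)"
      unfolding \<phi>_def using core[OF assms(3,4) _ _ r0 rb] by blast
    have "Ind G (XS G S) (scalars G) \<le> ereal (op_norm G (\<phi> (unit_el G)))"
      unfolding Ind_def by (rule Inf_lower) (use cp sc pos in blast)
    also have "\<phi> (unit_el G) = (\<lambda>g. of_real (1 + r) * unit_el G g)"
      by (simp add: \<phi>_def unit_el_def)
    also have "ereal (op_norm G (\<lambda>g. of_real (1 + r) * unit_el G g)) \<le> ereal (1 + r)"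
      using opnorm_phi[of "1 + r"] r0 by simp
    also have "\<dots> = 1 + rho_S G S" using rS by simp
    finally show ?thesis .
  qed
qed

end
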